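(* Let $C$ be a Reedy category, let $\Gamma$ be one of $\int N(C)$, $\int N^{-,+}(C)$, $\int N^{--,+}_+(C)$, $\mathrm{Down}_*(C)$, $\mathrm{Down}(C)$, and let $\mathrm{last}\colon\Gamma\to C$ be the last component functor. Let $F,G\colon C\to D$ be functors. Then for every natural transformation $\epsilon\colon F\circ\mathrm{last}\Rightarrow G\circ\mathrm{last}$ there is a unique natural transformation $\tilde\epsilon\colon F\Rightarrow G$ with $\tilde\epsilon\,\mathrm{last}=\epsilon$ (right whiskering).
   Context: A Reedy category $(C,C_-,C_+)$: wide subcategories with unique factorization of every morphism as ($C_-$ then $C_+$), every morphism of $C_\pm$ decidably identity or not, and the relation ($x<'y$ iff non-identity $x\to y$ in $C_+$ or non-identity $y\to x$ in $C_-$) well-founded. $\Delta$: finite ordinals $[n]$ and order-preserving maps. $\int N(C)$: objects $([n],X)$ with $X\colon[n]\to C$ a functor; morphisms $([m],X)\to([n],Y)$ are $(\alpha,\theta)$, $\alpha\colon[m]\to[n]$ in $\Delta$, $\theta\colon X\Rightarrow Y\circ\alpha$; composition $(\beta,\varphi)\circ(\alpha,\theta)=(\beta\alpha,(\varphi\alpha)\circ\theta)$. $\int N^{-,+}(C)$: subcategory of objects with $X$ sending all morphisms into $C_-$ and morphisms with all $\theta_i\in C_+$. $\int N^{--,+}_+(C)$: its subcategory of objects whose $X$ reflects identities and morphisms with $\alpha$ injective. Order on hom-sets: $(\alpha,\theta)\le(\alpha',\theta')$ iff $\alpha\le\alpha'$ pointwise and $\theta'_i=Y(\alpha(i)\le\alpha'(i))\circ\theta_i$;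 $\mathrm{Down}_*(C)$, $\mathrm{Down}(C)$ are the quotients of $\int N^{-,+}(C)$, $\int N^{--,+}_+(C)$ by the equivalence relation generated by $\le$ on hom-sets. $\mathrm{last}([n],X)=X(n)$, $\mathrm{last}(\alpha,\theta)=Y(\alpha(m)\le n)\circ\theta_m$ for $(\alpha,\theta)\colon([m],X)\to([n],Y)$, descending to the quotients. *)

theory Defs
  imports Main
begin

record ('o, 'm) cat =
  cObj  :: "'o set"
  cArr  :: "'m set"
  cdom  :: "'m \<Rightarrow> 'o"
  ccod  :: "'m \<Rightarrow> 'o"
  ccomp :: "'m \<Rightarrow> 'm \<Rightarrow> 'm"   (* ccomp C g f = g o f *)
  cid   :: "'o \<Rightarrow> 'm"

definition is_cat :: "('o, 'm) cat \<Rightarrow> bool" where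
  "is_cat C \<equiv>
     (\<forall>f\<in>cArr C. cdom C f \<in> cObj C \<and> ccod C f \<in> cObj C) \<and>
     (\<forall>x\<in>cObj C. cid C x \<in> cArr C \<and> cdom C (cid C x) = x \<and> ccod C (cid C x) = x) \<and>
     (\<forall>f\<in>cArr C. \<forall>g\<in>cArr C. ccod C f = cdom C g \<longrightarrow>
        ccomp C g f \<in> cArr C \<and> cdom C (ccomp C g f) = cdom C f \<and> ccod C (ccomp C g f) = ccod C g) \<and>
     (\<forall>f\<in>cArr C. ccomp C (cid C (ccod C f)) f = f \<and> ccomp C f (cid C (cdom C f)) = f) \<and>
     (\<forall>f\<in>cArr C. \<forall>g\<in>cArr C. \<forall>h\<in>cArr C. ccod C f = cdom C g \<and> ccod C g = cdom C h \<longrightarrow>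
        ccomp C h (ccomp C g f) = ccomp C (ccomp C h g) f)"

definition is_functor :: "('o, 'm) cat \<Rightarrow> ('p, 'n) cat \<Rightarrow> ('o \<Rightarrow> 'p) \<times> ('m \<Rightarrow> 'n) \<Rightarrow> bool" where
  "is_functor C D F \<equiv>
     (\<forall>x\<in>cObj C. fst F x \<in> cObj D) \<and>
     (\<forall>f\<in>cArr C. snd F f \<in> cArr D \<and> cdom D (snd F f) = fst F (cdom C f) \<and>
                 ccod D (snd F f) = fst F (ccod C f)) \<and>
     (\<forall>x\<in>cObj C. snd F (cid C x) = cid D (fst F x)) \<and>
     (\<forall>f\<in>cArr C. \<forall>g\<in>cArr C. ccod C f = cdom C g \<longrightarrow>
        snd F (ccomp C g f) = ccomp D (snd F g) (snd F f))"

definition fcomp :: "('o \<Rightarrow> 'p) \<times> ('m \<Rightarrow> 'n) \<Rightarrow> ('g \<Rightarrow> 'o) \<times> ('a \<Rightarrow> 'm) \<Rightarrow> ('g \<Rightarrow> 'p) \<times> ('a \<Rightarrow> 'n)" where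
  "fcomp F L = (fst F \<circ> fst L, snd F \<circ> snd L)"

definition nat_trans :: "('o, 'm) cat \<Rightarrow> ('p, 'n) cat \<Rightarrow> ('o \<Rightarrow> 'p) \<times> ('m \<Rightarrow> 'n)
    \<Rightarrow> ('o \<Rightarrow> 'p) \<times> ('m \<Rightarrow> 'n) \<Rightarrow> ('o \<Rightarrow> 'n) \<Rightarrow> bool" where
  "nat_trans C D F G \<eta> \<equiv>
     (\<forall>x\<in>cObj C. \<eta> x \<in> cArr D \<and> cdom D (\<eta> x) = fst F x \<and> ccod D (\<eta> x) = fst G x) \<and>
     (\<forall>f\<in>cArr C. ccomp D (\<eta> (ccod C f)) (snd F f) = ccomp D (snd G f) (\<eta> (cdom C f)))"

definition wide_subcat :: "('o, 'm) cat \<Rightarrow> 'm set \<Rightarrow> bool" where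
  "wide_subcat C S \<equiv> S \<subseteq> cArr C \<and> (\<forall>x\<in>cObj C. cid C x \<in> S) \<and>
     (\<forall>f\<in>S. \<forall>g\<in>S. ccod C f = cdom C g \<longrightarrow> ccomp C g f \<in> S)"

definition reedy_less :: "('o, 'm) cat \<Rightarrow> 'm set \<Rightarrow> 'm set \<Rightarrow> ('o \<times> 'o) set" where
  "reedy_less C Cm Cp = {(x, y). x \<in> cObj C \<and> y \<in> cObj C \<and>
     ((\<exists>f\<in>Cp. cdom C f = x \<and> ccod C f = y \<and> f \<noteq> cid C x) \<or>
      (\<exists>f\<in>Cm. cdom C f = y \<and> ccod C f = x \<and> f \<noteq> cid C y))}"

definition reedy :: "('o, 'm) cat \<Rightarrow> 'm set \<Rightarrow> 'm set \<Rightarrow> bool" where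
  "reedy C Cm Cp \<equiv> is_cat C \<and> wide_subcat C Cm \<and> wide_subcat C Cp \<and>
     (\<forall>f\<in>cArr C. \<exists>!gh. fst gh \<in> Cm \<and> snd gh \<in> Cp \<and> cdom C (fst gh) = cdom C f \<and>
        ccod C (fst gh) = cdom C (snd gh) \<and> ccod C (snd gh) = ccod C f \<and>
        ccomp C (snd gh) (fst gh) = f) \<and>
     wf (reedy_less C Cm Cp)"

text \<open>An object ([n], X): X i j (for i \<le> j \<le> n) is the image of i \<le> j; undefined elsewhere.
  The object X(i) is the domain of X i i.\<close>
type_synonym 'm nobj = "nat \<times> (nat \<Rightarrow> nat \<Rightarrow> 'm)"
type_synonym 'm narr = "'m nobj \<times> 'm nobj \<times> (nat \<Rightarrow> nat) \<times> (nat \<Rightarrow> 'm)"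

definition nobj_at :: "('o, 'm) cat \<Rightarrow> 'm nobj \<Rightarrow> nat \<Rightarrow> 'o" where
  "nobj_at C A i = cdom C (snd A i i)"

definition nerve_obj :: "('o, 'm) cat \<Rightarrow> 'm nobj \<Rightarrow> bool" where
  "nerve_obj C A \<equiv> (case A of (n, X) \<Rightarrow>
     (\<forall>i j. \<not> (i \<le> j \<and> j \<le> n) \<longrightarrow> X i j = undefined) \<and>
     (\<forall>i j. i \<le> j \<and> j \<le> n \<longrightarrow> X i j \<in> cArr C \<and>
         cdom C (X i j) = cdom C (X i i) \<and> ccod C (X i j) = cdom C (X j j)) \<and>
     (\<forall>i\<le>n. X i i = cid C (cdom C (X i i))) \<and>
     (\<forall>i j k. i \<le> j \<and> j \<le> k \<and> k \<le> n \<longrightarrow> ccomp C (X j k) (X i j) = X i k))"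

definition nerve_arr :: "('o, 'm) cat \<Rightarrow> 'm narr \<Rightarrow> bool" where
  "nerve_arr C f \<equiv> (case f of (A, B, \<alpha>, \<theta>) \<Rightarrow>
     nerve_obj C A \<and> nerve_obj C B \<and>
     (\<forall>i. fst A < i \<longrightarrow> \<alpha> i = undefined \<and> \<theta> i = undefined) \<and>
     (\<forall>i\<le>fst A. \<alpha> i \<le> fst B) \<and>
     (\<forall>i j. i \<le> j \<and> j \<le> fst A \<longrightarrow> \<alpha> i \<le> \<alpha> j) \<and>
     (\<forall>i\<le>fst A. \<theta> i \<in> cArr C \<and> cdom C (\<theta> i) = nobj_at C A i \<and>
                 ccod C (\<theta> i) = nobj_at C B (\<alpha> i)) \<and>
     (\<forall>i j. i \<le> j \<and> j \<le> fst A \<longrightarrow>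
        ccomp C (\<theta> j) (snd A i j) = ccomp C (snd B (\<alpha> i) (\<alpha> j)) (\<theta> i)))"

definition intN :: "('o, 'm) cat \<Rightarrow> ('m nobj, 'm narr) cat" where
  "intN C = \<lparr> cObj = {A. nerve_obj C A},
     cArr = {f. nerve_arr C f},
     cdom = (\<lambda>f. fst f),
     ccod = (\<lambda>f. fst (snd f)),
     ccomp = (\<lambda>g f. (fst f, fst (snd g),
        (\<lambda>i. if i \<le> fst (fst f) then fst (snd (snd g)) (fst (snd (snd f)) i) else undefined),
        (\<lambda>i. if i \<le> fst (fst f)
             then ccomp C (snd (snd (snd g)) (fst (snd (snd f)) i)) (snd (snd (snd f)) i)
             else undefined))),
     cid = (\<lambda>A. (A, A, (\<lambda>i. if i \<le> fst A then i else undefined),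
        (\<lambda>i. if i \<le> fst A then cid C (nobj_at C A i) else undefined))) \<rparr>"

definition subcat :: "('o, 'm) cat \<Rightarrow> ('o \<Rightarrow> bool) \<Rightarrow> ('m \<Rightarrow> bool) \<Rightarrow> ('o, 'm) cat" where
  "subcat C P Q = C \<lparr> cObj := {x \<in> cObj C. P x},
     cArr := {f \<in> cArr C. P (cdom C f) \<and> P (ccod C f) \<and> Q f} \<rparr>"

definition intN_mp :: "('o, 'm) cat \<Rightarrow> 'm set \<Rightarrow> 'm set \<Rightarrow> ('m nobj, 'm narr) cat" where
  "intN_mp C Cm Cp = subcat (intN C)
     (\<lambda>A. \<forall>i j. i \<le> j \<and> j \<le> fst A \<longrightarrow> snd A i j \<in> Cm)
     (\<lambda>f. \<forall>i\<le>fst (fst f). snd (snd (snd f)) i \<in> Cp)"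

definition intN_mmpp :: "('o, 'm) cat \<Rightarrow> 'm set \<Rightarrow> 'm set \<Rightarrow> ('m nobj, 'm narr) cat" where
  "intN_mmpp C Cm Cp = subcat (intN_mp C Cm Cp)
     (\<lambda>A. \<forall>i j. i \<le> j \<and> j \<le> fst A \<and> snd A i j = cid C (nobj_at C A i) \<longrightarrow> i = j)
     (\<lambda>f. inj_on (fst (snd (snd f))) {0..fst (fst f)})"

definition nerve_le :: "('o, 'm) cat \<Rightarrow> 'm narr \<Rightarrow> 'm narr \<Rightarrow> bool" where
  "nerve_le C f f' \<equiv> (case f of (A, B, \<alpha>, \<theta>) \<Rightarrow> case f' of (A', B', \<alpha>', \<theta>') \<Rightarrow>
     A = A' \<and> B = B' \<and>
     (\<forall>i\<le>fst A. \<alpha> i \<le> \<alpha>' i \<and> \<theta>' i = ccomp C (snd B (\<alpha> i) (\<alpha>' i)) (\<theta> i)))"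

text \<open>Equivalence relation on the arrows of G generated by the order (which only relates
  parallel arrows, so it lives on hom-sets).\<close>
definition le_equiv :: "('o, 'm) cat \<Rightarrow> ('m nobj, 'm narr) cat \<Rightarrow> ('m narr \<times> 'm narr) set" where
  "le_equiv C G = ({(f, g). f \<in> cArr G \<and> g \<in> cArr G \<and> (nerve_le C f g \<or> nerve_le C g f)})\<^sup>*"

definition quot_cat :: "('x, 'a) cat \<Rightarrow> ('a \<times> 'a) set \<Rightarrow> ('x, 'a set) cat" where
  "quot_cat G R = \<lparr> cObj = cObj G,
     cArr = {R `` {f} | f. f \<in> cArr G},
     cdom = (\<lambda>F. cdom G (SOME f. f \<in> F)),
     ccod = (\<lambda>F. ccod G (SOME f. f \<in> F)),
     ccomp = (\<lambda>H F. R `` {ccomp G (SOME h. h \<in> H) (SOME f. f \<in> F)}),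
     cid = (\<lambda>x. R `` {cid G x}) \<rparr>"

definition Down_star :: "('o, 'm) cat \<Rightarrow> 'm set \<Rightarrow> 'm set \<Rightarrow> ('m nobj, 'm narr set) cat" where
  "Down_star C Cm Cp = quot_cat (intN_mp C Cm Cp) (le_equiv C (intN_mp C Cm Cp))"

definition Down :: "('o, 'm) cat \<Rightarrow> 'm set \<Rightarrow> 'm set \<Rightarrow> ('m nobj, 'm narr set) cat" where
  "Down C Cm Cp = quot_cat (intN_mmpp C Cm Cp) (le_equiv C (intN_mmpp C Cm Cp))"

definition last_obj :: "('o, 'm) cat \<Rightarrow> 'm nobj \<Rightarrow> 'o" where
  "last_obj C A = nobj_at C A (fst A)"

definition last_arr :: "('o, 'm) cat \<Rightarrow> 'm narr \<Rightarrow> 'm" where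
  "last_arr C f = (case f of (A, B, \<alpha>, \<theta>) \<Rightarrow>
     ccomp C (snd B (\<alpha> (fst A)) (fst B)) (\<theta> (fst A)))"

definition last_fun :: "('o, 'm) cat \<Rightarrow> ('m nobj \<Rightarrow> 'o) \<times> ('m narr \<Rightarrow> 'm)" where
  "last_fun C = (last_obj C, last_arr C)"

definition last_fun_q :: "('o, 'm) cat \<Rightarrow> ('m nobj \<Rightarrow> 'o) \<times> ('m narr set \<Rightarrow> 'm)" where
  "last_fun_q C = (last_obj C, \<lambda>F. last_arr C (SOME f. f \<in> F))"

definition whisker_unique ::
  "('o, 'm) cat \<Rightarrow> ('p, 'n) cat \<Rightarrow> ('g, 'a) cat \<Rightarrow> ('g \<Rightarrow> 'o) \<times> ('a \<Rightarrow> 'm)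
     \<Rightarrow> ('o \<Rightarrow> 'p) \<times> ('m \<Rightarrow> 'n) \<Rightarrow> ('o \<Rightarrow> 'p) \<times> ('m \<Rightarrow> 'n) \<Rightarrow> bool" where
  "whisker_unique C D \<Gamma> L F G \<equiv>
     \<forall>\<epsilon>. nat_trans \<Gamma> D (fcomp F L) (fcomp G L) \<epsilon> \<longrightarrow>
       (\<exists>!\<epsilon>'. (\<forall>x. x \<notin> cObj C \<longrightarrow> \<epsilon>' x = undefined) \<and> nat_trans C D F G \<epsilon>' \<and>
              (\<forall>x\<in>cObj \<Gamma>. \<epsilon>' (fst L x) = \<epsilon> x))"

end

theory Submission
  imports Defs
begin


lemma catD:
  assumes "is_cat C"
  shows cat_dom: "f \<in> cArr C \<Longrightarrow> cdom C f \<in> cObj C"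
    and cat_cod: "f \<in> cArr C \<Longrightarrow> ccod C f \<in> cObj C"
    and cat_id: "x \<in> cObj C \<Longrightarrow> cid C x \<in> cArr C"
    and cat_id_dom: "x \<in> cObj C \<Longrightarrow> cdom C (cid C x) = x"
    and cat_id_cod: "x \<in> cObj C \<Longrightarrow> ccod C (cid C x) = x"
    and cat_comp: "f \<in> cArr C \<Longrightarrow> g \<in> cArr C \<Longrightarrow> ccod C f = cdom C g \<Longrightarrow> ccomp C g f \<in> cArr C"
    and cat_comp_dom: "f \<in> cArr C \<Longrightarrow> g \<in> cArr C \<Longrightarrow> ccod C f = cdom C g \<Longrightarrow> cdom C (ccomp C g f) = cdom C f"
    and cat_comp_cod: "f \<in> cArr C \<Longrightarrow> g \<in> cArr C \<Longrightarrow> ccod C f = cdom C g \<Longrightarrow> ccod C (ccomp C g f) = ccod C g"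
    and cat_idl: "f \<in> cArr C \<Longrightarrow> ccomp C (cid C (ccod C f)) f = f"
    and cat_idr: "f \<in> cArr C \<Longrightarrow> ccomp C f (cid C (cdom C f)) = f"
    and cat_assoc: "f \<in> cArr C \<Longrightarrow> g \<in> cArr C \<Longrightarrow> h \<in> cArr C \<Longrightarrow> ccod C f = cdom C g \<Longrightarrow> ccod C g = cdom C h \<Longrightarrow>
        ccomp C h (ccomp C g f) = ccomp C (ccomp C h g) f"
  using assms unfolding is_cat_def by blast+

lemma funD:
  assumes "is_functor C D F"
  shows fun_obj: "x \<in> cObj C \<Longrightarrow> fst F x \<in> cObj D"
    and fun_arr: "f \<in> cArr C \<Longrightarrow> snd F f \<in> cArr D"
    and fun_dom: "f \<in> cArr C \<Longrightarrow> cdom D (snd F f) = fst F (cdom C f)"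
    and fun_cod: "f \<in> cArr C \<Longrightarrow> ccod D (snd F f) = fst F (ccod C f)"
    and fun_id: "x \<in> cObj C \<Longrightarrow> snd F (cid C x) = cid D (fst F x)"
    and fun_comp: "f \<in> cArr C \<Longrightarrow> g \<in> cArr C \<Longrightarrow> ccod C f = cdom C g \<Longrightarrow>
        snd F (ccomp C g f) = ccomp D (snd F g) (snd F f)"
  using assms unfolding is_functor_def by blast+

lemma abstract:
  assumes C: "is_cat C" and D: "is_cat D" and F: "is_functor C D F" and G: "is_functor C D G"
  and Cm: "Cm \<subseteq> cArr C" and Cp: "Cp \<subseteq> cArr C"
  and dec: "\<forall>f\<in>cArr C. \<exists>m p. m \<in> Cm \<and> p \<in> Cp \<and> cdom C m = cdom C f \<and> ccod C m = cdom C p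
      \<and> ccod C p = ccod C f \<and> ccomp C p m = f"
  and P1: "\<forall>c\<in>cObj C. pt c \<in> cObj \<Gamma> \<and> fst L (pt c) = c"
  and P2: "\<forall>x\<in>cObj \<Gamma>. fst L x \<in> cObj C \<and> (\<exists>a\<in>cArr \<Gamma>. cdom \<Gamma> a = pt (fst L x) \<and> ccod \<Gamma> a = x
      \<and> snd L a = cid C (fst L x))"
  and P3: "\<forall>p\<in>Cp. \<exists>a\<in>cArr \<Gamma>. cdom \<Gamma> a = pt (cdom C p) \<and> ccod \<Gamma> a = pt (ccod C p) \<and> snd L a = p"
  and P4: "\<forall>m\<in>Cm. m \<noteq> cid C (cdom C m) \<longrightarrow> (\<exists>a\<in>cArr \<Gamma>. cdom \<Gamma> a = pt (cdom C m)
      \<and> ccod \<Gamma> a \<in> cObj \<Gamma> \<and> fst L (ccod \<Gamma> a) = ccod C m \<and> snd L a = m)"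
  shows "whisker_unique C D \<Gamma> L F G"
  unfolding whisker_unique_def
proof (intro allI impI)
  fix \<epsilon> assume NT: "nat_trans \<Gamma> D (fcomp F L) (fcomp G L) \<epsilon>"
  have e_obj: "\<epsilon> x \<in> cArr D \<and> cdom D (\<epsilon> x) = fst F (fst L x) \<and> ccod D (\<epsilon> x) = fst G (fst L x)"
    if "x \<in> cObj \<Gamma>" for x using NT that unfolding nat_trans_def fcomp_def by auto
  have e_nat: "ccomp D (\<epsilon> (ccod \<Gamma> a)) (snd F (snd L a)) = ccomp D (snd G (snd L a)) (\<epsilon> (cdom \<Gamma> a))"
    if "a \<in> cArr \<Gamma>" for a using NT that unfolding nat_trans_def fcomp_def by auto
  have e_pt: "\<epsilon> x = \<epsilon> (pt (fst L x))" if x: "x \<in> cObj \<Gamma>" for x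
  proof -
    obtain a where a: "a \<in> cArr \<Gamma>" "cdom \<Gamma> a = pt (fst L x)" "ccod \<Gamma> a = x"
      "snd L a = cid C (fst L x)" and Lx: "fst L x \<in> cObj C" using P2 x by blast
    have ptx: "pt (fst L x) \<in> cObj \<Gamma>" "fst L (pt (fst L x)) = fst L x" using P1 Lx by auto
    have "\<epsilon> x = ccomp D (\<epsilon> x) (cid D (fst F (fst L x)))"
      using cat_idr[OF D, of "\<epsilon> x"] e_obj[OF x] by simp
    also have "\<dots> = ccomp D (cid D (fst G (fst L x))) (\<epsilon> (pt (fst L x)))"
      using e_nat[OF a(1)] a fun_id[OF F Lx] fun_id[OF G Lx] by simp
    also have "\<dots> = \<epsilon> (pt (fst L x))"
      using cat_idl[OF D, of "\<epsilon> (pt (fst L x))"] e_obj[OF ptx(1)] ptx(2) by simp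
    finally show ?thesis .
  qed
  define \<epsilon>' where "\<epsilon>' = (\<lambda>c. if c \<in> cObj C then \<epsilon> (pt c) else undefined)"
  have e'_obj: "\<epsilon>' c \<in> cArr D \<and> cdom D (\<epsilon>' c) = fst F c \<and> ccod D (\<epsilon>' c) = fst G c"
    if "c \<in> cObj C" for c using e_obj[of "pt c"] P1 that unfolding \<epsilon>'_def by auto
  have natp: "ccomp D (\<epsilon>' (ccod C p)) (snd F p) = ccomp D (snd G p) (\<epsilon>' (cdom C p))" if p: "p \<in> Cp" for p
  proof -
    obtain a where a: "a \<in> cArr \<Gamma>" "cdom \<Gamma> a = pt (cdom C p)" "ccod \<Gamma> a = pt (ccod C p)" "snd L a = p"
      using P3 p by blast
    have "p \<in> cArr C" using p Cp by auto
    then show ?thesis using e_nat[OF a(1)] a cat_dom[OF C] cat_cod[OF C] unfolding \<epsilon>'_def by simp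
  qed
  have natm: "ccomp D (\<epsilon>' (ccod C m)) (snd F m) = ccomp D (snd G m) (\<epsilon>' (cdom C m))" if m: "m \<in> Cm" for m
  proof -
    have mC: "m \<in> cArr C" using m Cm by auto
    have dm: "cdom C m \<in> cObj C" and cm: "ccod C m \<in> cObj C" using cat_dom[OF C mC] cat_cod[OF C mC] .
    show ?thesis
    proof (cases "m = cid C (cdom C m)")
      case True
      then have cc: "ccod C m = cdom C m" using cat_id_cod[OF C dm] by metis
      have "snd F m = cid D (fst F (cdom C m))" "snd G m = cid D (fst G (cdom C m))"
        using True fun_id[OF F dm] fun_id[OF G dm] by metis+
      then show ?thesis using cc e'_obj[OF dm] cat_idl[OF D, of "\<epsilon>' (cdom C m)"] cat_idr[OF D, of "\<epsilon>' (cdom C m)"]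
        by simp
    next
      case False
      then obtain a where a: "a \<in> cArr \<Gamma>" "cdom \<Gamma> a = pt (cdom C m)"
        "ccod \<Gamma> a \<in> cObj \<Gamma>" "fst L (ccod \<Gamma> a) = ccod C m" "snd L a = m" using P4 m by blast
      show ?thesis using e_nat[OF a(1)] a e_pt[OF a(3)] dm cm unfolding \<epsilon>'_def by simp
    qed
  qed
  have nat: "ccomp D (\<epsilon>' (ccod C f)) (snd F f) = ccomp D (snd G f) (\<epsilon>' (cdom C f))" if f: "f \<in> cArr C" for f
  proof -
    obtain m p where mp: "m \<in> Cm" "p \<in> Cp" "cdom C m = cdom C f" "ccod C m = cdom C p"
      "ccod C p = ccod C f" "ccomp C p m = f" using dec f by blast
    have mC: "m \<in> cArr C" and pC: "p \<in> cArr C" using mp Cm Cp by auto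
    define c where "c = cdom C m"
    define e where "e = ccod C m"
    define d where "d = ccod C p"
    have c: "c \<in> cObj C" and e: "e \<in> cObj C" and d: "d \<in> cObj C"
      using cat_dom[OF C mC] cat_cod[OF C mC] cat_cod[OF C pC] c_def e_def d_def by auto
    have Ff: "snd F f = ccomp D (snd F p) (snd F m)" and Gf: "snd G f = ccomp D (snd G p) (snd G m)"
      using fun_comp[OF F mC pC] fun_comp[OF G mC pC] mp by auto
    note Fm = fun_arr[OF F mC] fun_dom[OF F mC] fun_cod[OF F mC]
    note Fp = fun_arr[OF F pC] fun_dom[OF F pC] fun_cod[OF F pC]
    note Gm = fun_arr[OF G mC] fun_dom[OF G mC] fun_cod[OF G mC]
    note Gp = fun_arr[OF G pC] fun_dom[OF G pC] fun_cod[OF G pC]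
    note ec = e'_obj[OF c] and ee = e'_obj[OF e] and ed = e'_obj[OF d]
    have "ccomp D (\<epsilon>' d) (snd F f) = ccomp D (ccomp D (\<epsilon>' d) (snd F p)) (snd F m)"
      unfolding Ff using cat_assoc[OF D Fm(1) Fp(1) ed[THEN conjunct1]] Fm Fp ed mp d_def e_def by simp
    also have "\<dots> = ccomp D (ccomp D (snd G p) (\<epsilon>' e)) (snd F m)"
      using natp[OF mp(2)] mp d_def e_def by simp
    also have "\<dots> = ccomp D (snd G p) (ccomp D (\<epsilon>' e) (snd F m))"
      using cat_assoc[OF D Fm(1) ee[THEN conjunct1] Gp(1)] Fm Gp ee mp e_def by simp
    also have "\<dots> = ccomp D (snd G p) (ccomp D (snd G m) (\<epsilon>' c))"
      using natm[OF mp(1)] e_def c_def by simp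
    also have "\<dots> = ccomp D (snd G f) (\<epsilon>' c)"
      unfolding Gf using cat_assoc[OF D ec[THEN conjunct1] Gm(1) Gp(1)] Gm Gp ec mp c_def e_def by simp
    finally show ?thesis using mp c_def d_def by simp
  qed
  have NT': "nat_trans C D F G \<epsilon>'" unfolding nat_trans_def using e'_obj nat by blast
  have W: "\<forall>x\<in>cObj \<Gamma>. \<epsilon>' (fst L x) = \<epsilon> x" using e_pt P2 unfolding \<epsilon>'_def by simp
  show "\<exists>!\<epsilon>'. (\<forall>x. x \<notin> cObj C \<longrightarrow> \<epsilon>' x = undefined) \<and> nat_trans C D F G \<epsilon>' \<and>
              (\<forall>x\<in>cObj \<Gamma>. \<epsilon>' (fst L x) = \<epsilon> x)"
  proof (rule ex1I[of _ \<epsilon>'])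
    show "(\<forall>x. x \<notin> cObj C \<longrightarrow> \<epsilon>' x = undefined) \<and> nat_trans C D F G \<epsilon>' \<and> (\<forall>x\<in>cObj \<Gamma>. \<epsilon>' (fst L x) = \<epsilon> x)"
      using NT' W unfolding \<epsilon>'_def by simp
  next
    fix \<eta> assume h: "(\<forall>x. x \<notin> cObj C \<longrightarrow> \<eta> x = undefined) \<and> nat_trans C D F G \<eta> \<and> (\<forall>x\<in>cObj \<Gamma>. \<eta> (fst L x) = \<epsilon> x)"
    show "\<eta> = \<epsilon>'"
    proof
      fix c show "\<eta> c = \<epsilon>' c"
      proof (cases "c \<in> cObj C")
        case True
        then have "\<eta> (fst L (pt c)) = \<epsilon> (pt c)" using h P1 by blast
        then show ?thesis using True P1 unfolding \<epsilon>'_def by simp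
      qed (use h in \<open>simp add: \<epsilon>'_def\<close>)
    qed
  qed
qed




definition pt :: "('o, 'm) cat \<Rightarrow> 'o \<Rightarrow> 'm nobj" where
  "pt C c = (0, \<lambda>i j. if i = 0 \<and> j = 0 then cid C c else undefined)"

definition incl :: "('o, 'm) cat \<Rightarrow> 'm nobj \<Rightarrow> 'm narr" where
  "incl C A = (pt C (last_obj C A), A, \<lambda>i. if i = 0 then fst A else undefined,
     \<lambda>i. if i = 0 then cid C (last_obj C A) else undefined)"

definition parr :: "('o, 'm) cat \<Rightarrow> 'm \<Rightarrow> 'm narr" where
  "parr C p = (pt C (cdom C p), pt C (ccod C p), \<lambda>i. if i = 0 then 0 else undefined,
     \<lambda>i. if i = 0 then p else undefined)"

definition X1 :: "('o, 'm) cat \<Rightarrow> 'm \<Rightarrow> 'm nobj" where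
  "X1 C m = (1, \<lambda>i j. if i = 0 \<and> j = 0 then cid C (cdom C m) else if i = 0 \<and> j = 1 then m
     else if i = 1 \<and> j = 1 then cid C (ccod C m) else undefined)"

definition marr :: "('o, 'm) cat \<Rightarrow> 'm \<Rightarrow> 'm narr" where
  "marr C m = (pt C (cdom C m), X1 C m, \<lambda>i. if i = 0 then 0 else undefined,
     \<lambda>i. if i = 0 then cid C (cdom C m) else undefined)"

lemma pt_obj:
  assumes C: "is_cat C" and c: "c \<in> cObj C"
  shows "nerve_obj C (pt C c)" "last_obj C (pt C c) = c" "nobj_at C (pt C c) 0 = c"
  using cat_id[OF C c] cat_id_dom[OF C c] cat_id_cod[OF C c] cat_idl[OF C, of "cid C c"]
  unfolding nerve_obj_def pt_def last_obj_def nobj_at_def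
  apply (simp_all only: prod.case)
  apply (intro conjI allI impI)
  apply simp_all
  apply (metis le_refl less_irrefl)
  done

lemma nerve_objD:
  assumes "nerve_obj C (n, X)"
  shows nobj_undef: "\<not> (i \<le> j \<and> j \<le> n) \<Longrightarrow> X i j = undefined"
    and nobj_arr: "i \<le> j \<Longrightarrow> j \<le> n \<Longrightarrow> X i j \<in> cArr C"
    and nobj_dom: "i \<le> j \<Longrightarrow> j \<le> n \<Longrightarrow> cdom C (X i j) = cdom C (X i i)"
    and nobj_cod: "i \<le> j \<Longrightarrow> j \<le> n \<Longrightarrow> ccod C (X i j) = cdom C (X j j)"
    and nobj_id: "i \<le> n \<Longrightarrow> X i i = cid C (cdom C (X i i))"
    and nobj_comp: "i \<le> j \<Longrightarrow> j \<le> k \<Longrightarrow> k \<le> n \<Longrightarrow> ccomp C (X j k) (X i j) = X i k"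
  using assms unfolding nerve_obj_def by (simp_all only: prod.case; blast)+

lemma last_obj_in:
  assumes C: "is_cat C" and A: "nerve_obj C A"
  shows "last_obj C A \<in> cObj C"
proof -
  obtain n X where nX: "A = (n, X)" by fastforce
  have "X n n \<in> cArr C" using nobj_arr[OF A[unfolded nX]] by simp
  then show ?thesis using cat_dom[OF C] unfolding nX last_obj_def nobj_at_def by simp
qed

lemma nobj_diag:
  assumes C: "is_cat C" and A: "nerve_obj C A" and i: "i \<le> fst A"
  shows "snd A i i = cid C (nobj_at C A i)" "nobj_at C A i \<in> cObj C"
proof -
  obtain n X where nX: "A = (n, X)" by fastforce
  show "snd A i i = cid C (nobj_at C A i)" using nobj_id[OF A[unfolded nX]] i unfolding nX nobj_at_def by simp
  have "X i i \<in> cArr C" using nobj_arr[OF A[unfolded nX]] i unfolding nX by simp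
  then show "nobj_at C A i \<in> cObj C" using cat_dom[OF C] unfolding nX nobj_at_def by simp
qed

lemma nerve_arr0I:
  assumes "nerve_obj C A" "fst A = 0" "nerve_obj C B" "k \<le> fst B" "t \<in> cArr C"
    "cdom C t = nobj_at C A 0" "ccod C t = nobj_at C B k"
    "ccomp C t (snd A 0 0) = ccomp C (snd B k k) t"
  shows "nerve_arr C (A, B, \<lambda>i. if i = 0 then k else undefined, \<lambda>i. if i = 0 then t else undefined)"
  unfolding nerve_arr_def prod.case
proof (intro conjI allI impI)
  fix i j assume "i \<le> j \<and> j \<le> fst A"
  then have "i = 0" "j = 0" using assms(2) by auto
  then show "ccomp C ((\<lambda>i. if i = 0 then t else undefined) j) (snd A i j) =
    ccomp C (snd B ((\<lambda>i. if i = 0 then k else undefined) i) ((\<lambda>i. if i = 0 then k else undefined) j))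
     ((\<lambda>i. if i = 0 then t else undefined) i)" using assms(8) by simp
qed (use assms in \<open>auto\<close>)

lemma incl_arr:
  assumes C: "is_cat C" and A: "nerve_obj C A"
  shows "nerve_arr C (incl C A)" "last_arr C (incl C A) = cid C (last_obj C A)"
proof -
  have l: "last_obj C A \<in> cObj C" using last_obj_in[OF C A] .
  have d: "snd A (fst A) (fst A) = cid C (last_obj C A)"
    using nobj_diag[OF C A] unfolding last_obj_def by simp
  have ll: "nobj_at C A (fst A) = last_obj C A" unfolding last_obj_def ..
  note p = pt_obj[OF C l]
  have p00: "snd (pt C (last_obj C A)) 0 0 = cid C (last_obj C A)" by (simp add: pt_def)
  show "nerve_arr C (incl C A)" unfolding incl_def
    apply (rule nerve_arr0I[OF p(1) _ A])
    using p p00 d ll cat_id[OF C l] cat_id_dom[OF C l] cat_id_cod[OF C l]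
    by (simp_all add: pt_def)
  show "last_arr C (incl C A) = cid C (last_obj C A)"
    using d cat_idl[OF C, of "cid C (last_obj C A)"] cat_id[OF C l] cat_id_cod[OF C l]
    unfolding last_arr_def incl_def by (simp add: pt_def)
qed

lemma parr_arr:
  assumes C: "is_cat C" and p: "p \<in> cArr C"
  shows "nerve_arr C (parr C p)" "last_arr C (parr C p) = p"
proof -
  have d: "cdom C p \<in> cObj C" and c: "ccod C p \<in> cObj C" using cat_dom[OF C p] cat_cod[OF C p] .
  show "nerve_arr C (parr C p)" unfolding parr_def
    apply (rule nerve_arr0I[OF pt_obj(1)[OF C d] _ pt_obj(1)[OF C c]])
    using pt_obj[OF C d] pt_obj[OF C c] p cat_idl[OF C p] cat_idr[OF C p]
    by (simp_all add: pt_def)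
  show "last_arr C (parr C p) = p"
    using cat_idl[OF C p] unfolding last_arr_def parr_def by (simp add: pt_def)
qed

lemma le1: "(k::nat) \<le> 1 \<Longrightarrow> k = 0 \<or> k = 1" by auto

lemma X1_obj:
  assumes C: "is_cat C" and m: "m \<in> cArr C"
  shows "nerve_obj C (X1 C m)" "last_obj C (X1 C m) = ccod C m"
    "nobj_at C (X1 C m) 0 = cdom C m" "nobj_at C (X1 C m) 1 = ccod C m"
proof -
  have d: "cdom C m \<in> cObj C" and c: "ccod C m \<in> cObj C" using cat_dom[OF C m] cat_cod[OF C m] .
  note facts = cat_id[OF C d] cat_id_dom[OF C d] cat_id_cod[OF C d]
     cat_id[OF C c] cat_id_dom[OF C c] cat_id_cod[OF C c] cat_idl[OF C m] cat_idr[OF C m]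
     cat_idl[OF C, of "cid C (cdom C m)"] cat_idl[OF C, of "cid C (ccod C m)"] m
  show "nerve_obj C (X1 C m)"
    unfolding nerve_obj_def X1_def prod.case
  proof (intro conjI allI impI)
    fix i j :: nat assume "\<not> (i \<le> j \<and> j \<le> 1)"
    then show "(if i = 0 \<and> j = 0 then cid C (cdom C m) else if i = 0 \<and> j = 1 then m
     else if i = 1 \<and> j = 1 then cid C (ccod C m) else undefined) = undefined" by auto
  next
    fix i j :: nat assume h: "i \<le> j \<and> j \<le> 1"
    then have "(i = 0 \<and> j = 0) \<or> (i = 0 \<and> j = 1) \<or> (i = 1 \<and> j = 1)" by linarith
    then show "(if i = 0 \<and> j = 0 then cid C (cdom C m) else if i = 0 \<and> j = 1 then m
     else if i = 1 \<and> j = 1 then cid C (ccod C m) else undefined) \<in> cArr C"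
      "cdom C (if i = 0 \<and> j = 0 then cid C (cdom C m) else if i = 0 \<and> j = 1 then m
     else if i = 1 \<and> j = 1 then cid C (ccod C m) else undefined) = cdom C (if i = 0 \<and> i = 0 then cid C (cdom C m) else if i = 0 \<and> i = 1 then m
     else if i = 1 \<and> i = 1 then cid C (ccod C m) else undefined)"
      "ccod C (if i = 0 \<and> j = 0 then cid C (cdom C m) else if i = 0 \<and> j = 1 then m
     else if i = 1 \<and> j = 1 then cid C (ccod C m) else undefined) = cdom C (if j = 0 \<and> j = 0 then cid C (cdom C m) else if j = 0 \<and> j = 1 then m
     else if j = 1 \<and> j = 1 then cid C (ccod C m) else undefined)"
      using facts by (elim disjE; simp)+
  next
    fix i :: nat assume "i \<le> 1"
    then have "i = 0 \<or> i = 1" by linarith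
    then show "(if i = 0 \<and> i = 0 then cid C (cdom C m) else if i = 0 \<and> i = 1 then m
     else if i = 1 \<and> i = 1 then cid C (ccod C m) else undefined) = cid C (cdom C (if i = 0 \<and> i = 0 then cid C (cdom C m) else if i = 0 \<and> i = 1 then m
     else if i = 1 \<and> i = 1 then cid C (ccod C m) else undefined))"
      using facts by (elim disjE; simp)
  next
    fix i j k :: nat assume "i \<le> j \<and> j \<le> k \<and> k \<le> 1"
    then have "(i = 0 \<and> j = 0 \<and> k = 0) \<or> (i = 0 \<and> j = 0 \<and> k = 1) \<or> (i = 0 \<and> j = 1 \<and> k = 1)
      \<or> (i = 1 \<and> j = 1 \<and> k = 1)" by linarith
    then show "ccomp C (if j = 0 \<and> k = 0 then cid C (cdom C m) else if j = 0 \<and> k = 1 then m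
     else if j = 1 \<and> k = 1 then cid C (ccod C m) else undefined) (if i = 0 \<and> j = 0 then cid C (cdom C m) else if i = 0 \<and> j = 1 then m
     else if i = 1 \<and> j = 1 then cid C (ccod C m) else undefined) = (if i = 0 \<and> k = 0 then cid C (cdom C m) else if i = 0 \<and> k = 1 then m
     else if i = 1 \<and> k = 1 then cid C (ccod C m) else undefined)"
      using facts by (elim disjE; simp)
  qed
  show "last_obj C (X1 C m) = ccod C m" "nobj_at C (X1 C m) 0 = cdom C m" "nobj_at C (X1 C m) 1 = ccod C m"
    using facts unfolding last_obj_def nobj_at_def X1_def by simp_all
qed

lemma marr_arr:
  assumes C: "is_cat C" and m: "m \<in> cArr C"
  shows "nerve_arr C (marr C m)" "last_arr C (marr C m) = m"
proof -
  have d: "cdom C m \<in> cObj C" and c: "ccod C m \<in> cObj C" using cat_dom[OF C m] cat_cod[OF C m] .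
  note facts = cat_id[OF C d] cat_id_dom[OF C d] cat_id_cod[OF C d]
     cat_idl[OF C m] cat_idr[OF C m] cat_idl[OF C, of "cid C (cdom C m)"] m
  show "nerve_arr C (marr C m)" unfolding marr_def
    apply (rule nerve_arr0I[OF pt_obj(1)[OF C d] _ X1_obj(1)[OF C m]])
    using pt_obj[OF C d] X1_obj[OF C m] facts
    by (simp_all add: pt_def X1_def)
  show "last_arr C (marr C m) = m"
    using facts unfolding last_arr_def marr_def by (simp add: X1_def pt_def)
qed

lemma nerve_arrD:
  assumes "nerve_arr C (A, B, \<alpha>, \<theta>)"
  shows narr_A: "nerve_obj C A" and narr_B: "nerve_obj C B"
    and narr_bound: "i \<le> fst A \<Longrightarrow> \<alpha> i \<le> fst B"
    and narr_th: "i \<le> fst A \<Longrightarrow> \<theta> i \<in> cArr C"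
    and narr_thdom: "i \<le> fst A \<Longrightarrow> cdom C (\<theta> i) = nobj_at C A i"
    and narr_thcod: "i \<le> fst A \<Longrightarrow> ccod C (\<theta> i) = nobj_at C B (\<alpha> i)"
  using assms unfolding nerve_arr_def by (simp_all only: prod.case; blast)+

lemma last_le:
  assumes C: "is_cat C" and le: "nerve_le C g h" and g: "nerve_arr C g" and h: "nerve_arr C h"
  shows "last_arr C g = last_arr C h"
proof -
  obtain A B \<alpha> \<theta> where gg: "g = (A, B, \<alpha>, \<theta>)" by (cases g) auto
  obtain A' B' \<alpha>' \<theta>' where hh: "h = (A', B', \<alpha>', \<theta>')" by (cases h) auto
  have AB: "A' = A" "B' = B" and L: "\<forall>i\<le>fst A. \<alpha> i \<le> \<alpha>' i \<and> \<theta>' i = ccomp C (snd B (\<alpha> i) (\<alpha>' i)) (\<theta> i)"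
    using le unfolding gg hh nerve_le_def by simp_all
  note g' = g[unfolded gg] and h' = h[unfolded hh AB]
  obtain n Y where BY: "B = (n, Y)" by fastforce
  define m where "m = fst A"
  have B: "nerve_obj C (n, Y)" using narr_B[OF g'] BY by simp
  have a1: "\<alpha> m \<le> \<alpha>' m" and th': "\<theta>' m = ccomp C (Y (\<alpha> m) (\<alpha>' m)) (\<theta> m)"
    using L BY m_def by auto
  have a2: "\<alpha>' m \<le> n" using narr_bound[OF h', of m] BY m_def by simp
  have th: "\<theta> m \<in> cArr C" "ccod C (\<theta> m) = cdom C (Y (\<alpha> m) (\<alpha> m))"
    using narr_th[OF g', of m] narr_thcod[OF g', of m] BY m_def by (simp_all add: nobj_at_def)
  have y1: "Y (\<alpha> m) (\<alpha>' m) \<in> cArr C" "cdom C (Y (\<alpha> m) (\<alpha>' m)) = cdom C (Y (\<alpha> m) (\<alpha> m))"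
     "ccod C (Y (\<alpha> m) (\<alpha>' m)) = cdom C (Y (\<alpha>' m) (\<alpha>' m))"
    using nobj_arr[OF B a1 a2] nobj_dom[OF B a1 a2] nobj_cod[OF B a1 a2] by simp_all
  have y2: "Y (\<alpha>' m) n \<in> cArr C" "cdom C (Y (\<alpha>' m) n) = cdom C (Y (\<alpha>' m) (\<alpha>' m))"
    using nobj_arr[OF B a2 order_refl] nobj_dom[OF B a2 order_refl] by simp_all
  have "last_arr C h = ccomp C (Y (\<alpha>' m) n) (ccomp C (Y (\<alpha> m) (\<alpha>' m)) (\<theta> m))"
    unfolding last_arr_def hh AB BY using th' m_def by simp
  also have "\<dots> = ccomp C (ccomp C (Y (\<alpha>' m) n) (Y (\<alpha> m) (\<alpha>' m))) (\<theta> m)"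
    using cat_assoc[OF C th(1) y1(1) y2(1)] th y1 y2 by simp
  also have "\<dots> = ccomp C (Y (\<alpha> m) n) (\<theta> m)"
    using nobj_comp[OF B a1 a2 order_refl] by simp
  also have "\<dots> = last_arr C g" unfolding last_arr_def gg BY m_def by simp
  finally show ?thesis by simp
qed

lemma descent:
  assumes C: "is_cat C" and arrG: "cArr G \<subseteq> {f. nerve_arr C f}"
    and R: "(a, g) \<in> le_equiv C G" and a: "a \<in> cArr G"
  shows "g \<in> cArr G \<and> fst g = fst a \<and> fst (snd g) = fst (snd a) \<and> last_arr C g = last_arr C a"
  using R[unfolded le_equiv_def]
proof (induction rule: rtrancl_induct)
  case base then show ?case using a by simp
next
  case (step y z)
  then have yz: "y \<in> cArr G" "z \<in> cArr G" "nerve_le C y z \<or> nerve_le C z y" by auto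
  have ny: "nerve_arr C y" and nz: "nerve_arr C z" using yz arrG by auto
  have same: "fst z = fst y \<and> fst (snd z) = fst (snd y)"
    using yz(3) unfolding nerve_le_def by (cases y; cases z; auto)
  have "last_arr C z = last_arr C y"
    using yz(3) last_le[OF C _ ny nz] last_le[OF C _ nz ny] by auto
  then show ?case using step.IH same yz by simp
qed

lemma quot_arr:
  assumes C: "is_cat C" and arrG: "cArr G \<subseteq> {f. nerve_arr C f}"
    and dG: "cdom G = fst" and cG: "ccod G = (\<lambda>f. fst (snd f))"
    and a: "a \<in> cArr G"
  shows "le_equiv C G `` {a} \<in> cArr (quot_cat G (le_equiv C G))"
    "cdom (quot_cat G (le_equiv C G)) (le_equiv C G `` {a}) = fst a"
    "ccod (quot_cat G (le_equiv C G)) (le_equiv C G `` {a}) = fst (snd a)"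
    "snd (last_fun_q C) (le_equiv C G `` {a}) = last_arr C a"
proof -
  let ?R = "le_equiv C G"
  have "a \<in> ?R `` {a}" unfolding le_equiv_def by simp
  then have s: "(SOME f. f \<in> ?R `` {a}) \<in> ?R `` {a}" by (rule someI)
  have D: "(SOME f. f \<in> ?R `` {a}) \<in> cArr G \<and> fst (SOME f. f \<in> ?R `` {a}) = fst a \<and>
     fst (snd (SOME f. f \<in> ?R `` {a})) = fst (snd a) \<and> last_arr C (SOME f. f \<in> ?R `` {a}) = last_arr C a"
    using descent[OF C arrG _ a] s by blast
  show "?R `` {a} \<in> cArr (quot_cat G ?R)" unfolding quot_cat_def using a by (simp only: cat.select_convs; blast)
  show "cdom (quot_cat G ?R) (?R `` {a}) = fst a" "ccod (quot_cat G ?R) (?R `` {a}) = fst (snd a)"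
    "snd (last_fun_q C) (?R `` {a}) = last_arr C a"
    using D unfolding quot_cat_def last_fun_q_def dG cG by simp_all
qed

definition Pall :: "('o, 'm) cat \<Rightarrow> 'm set \<Rightarrow> 'm set \<Rightarrow> ('g, 'a) cat \<Rightarrow> ('g \<Rightarrow> 'o) \<times> ('a \<Rightarrow> 'm)
   \<Rightarrow> ('o \<Rightarrow> 'g) \<Rightarrow> bool" where
  "Pall C Cm Cp \<Gamma> L pp \<equiv> (\<forall>c\<in>cObj C. pp c \<in> cObj \<Gamma> \<and> fst L (pp c) = c) \<and>
   (\<forall>x\<in>cObj \<Gamma>. fst L x \<in> cObj C \<and> (\<exists>a\<in>cArr \<Gamma>. cdom \<Gamma> a = pp (fst L x) \<and> ccod \<Gamma> a = x
      \<and> snd L a = cid C (fst L x))) \<and>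
   (\<forall>p\<in>Cp. \<exists>a\<in>cArr \<Gamma>. cdom \<Gamma> a = pp (cdom C p) \<and> ccod \<Gamma> a = pp (ccod C p) \<and> snd L a = p) \<and>
   (\<forall>m\<in>Cm. m \<noteq> cid C (cdom C m) \<longrightarrow> (\<exists>a\<in>cArr \<Gamma>. cdom \<Gamma> a = pp (cdom C m)
      \<and> ccod \<Gamma> a \<in> cObj \<Gamma> \<and> fst L (ccod \<Gamma> a) = ccod C m \<and> snd L a = m))"

lemma reedy_whisker:
  assumes R: "reedy C Cm Cp" and D: "is_cat D" and F: "is_functor C D F" and G: "is_functor C D G"
    and P: "Pall C Cm Cp \<Gamma> L pp"
  shows "whisker_unique C D \<Gamma> L F G"
proof -
  have C: "is_cat C" and wm: "wide_subcat C Cm" and wp: "wide_subcat C Cp"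
    using R unfolding reedy_def by auto
  have dec: "\<forall>f\<in>cArr C. \<exists>m p. m \<in> Cm \<and> p \<in> Cp \<and> cdom C m = cdom C f \<and> ccod C m = cdom C p
      \<and> ccod C p = ccod C f \<and> ccomp C p m = f"
  proof
    fix f assume "f \<in> cArr C"
    then obtain gh where "fst gh \<in> Cm \<and> snd gh \<in> Cp \<and> cdom C (fst gh) = cdom C f \<and>
        ccod C (fst gh) = cdom C (snd gh) \<and> ccod C (snd gh) = ccod C f \<and>
        ccomp C (snd gh) (fst gh) = f" using R unfolding reedy_def by blast
    then show "\<exists>m p. m \<in> Cm \<and> p \<in> Cp \<and> cdom C m = cdom C f \<and> ccod C m = cdom C p
      \<and> ccod C p = ccod C f \<and> ccomp C p m = f" by blast
  qed
  show ?thesis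
    apply (rule abstract[OF C D F G _ _ dec, of pp \<Gamma> L])
    using wm wp P unfolding wide_subcat_def Pall_def by blast+
qed

lemma Pall_quot:
  assumes C: "is_cat C" and arrG: "cArr G \<subseteq> {f. nerve_arr C f}"
    and dG: "cdom G = fst" and cG: "ccod G = (\<lambda>f. fst (snd f))"
    and P: "Pall C Cm Cp G (last_fun C) pp"
  shows "Pall C Cm Cp (quot_cat G (le_equiv C G)) (last_fun_q C) pp"
proof -
  note Q = quot_arr[OF C arrG dG cG]
  have o: "cObj (quot_cat G (le_equiv C G)) = cObj G" unfolding quot_cat_def by simp
  have l: "fst (last_fun_q C) = fst (last_fun C)" unfolding last_fun_q_def last_fun_def by simp
  have P1: "\<forall>c\<in>cObj C. pp c \<in> cObj G \<and> fst (last_fun C) (pp c) = c" using P unfolding Pall_def by blast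
  have P2: "\<forall>x\<in>cObj G. fst (last_fun C) x \<in> cObj C \<and> (\<exists>a\<in>cArr G. fst a = pp (fst (last_fun C) x) \<and> fst (snd a) = x
      \<and> last_arr C a = cid C (fst (last_fun C) x))" using P dG cG unfolding Pall_def last_fun_def by simp
  have P3: "\<forall>p\<in>Cp. \<exists>a\<in>cArr G. fst a = pp (cdom C p) \<and> fst (snd a) = pp (ccod C p) \<and> last_arr C a = p"
    using P dG cG unfolding Pall_def last_fun_def by simp
  have P4: "\<forall>m\<in>Cm. m \<noteq> cid C (cdom C m) \<longrightarrow> (\<exists>a\<in>cArr G. fst a = pp (cdom C m)
      \<and> fst (snd a) \<in> cObj G \<and> fst (last_fun C) (fst (snd a)) = ccod C m \<and> last_arr C a = m)"
    using P dG cG unfolding Pall_def last_fun_def by simp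
  show ?thesis unfolding Pall_def o l
  proof (intro conjI)
    show "\<forall>c\<in>cObj C. pp c \<in> cObj G \<and> fst (last_fun C) (pp c) = c" by (rule P1)
    show "\<forall>x\<in>cObj G. fst (last_fun C) x \<in> cObj C \<and>
      (\<exists>a\<in>cArr (quot_cat G (le_equiv C G)). cdom (quot_cat G (le_equiv C G)) a = pp (fst (last_fun C) x) \<and>
      ccod (quot_cat G (le_equiv C G)) a = x \<and> snd (last_fun_q C) a = cid C (fst (last_fun C) x))"
    proof
      fix x assume "x \<in> cObj G"
      then obtain a where "a \<in> cArr G" "fst a = pp (fst (last_fun C) x)" "fst (snd a) = x"
        "last_arr C a = cid C (fst (last_fun C) x)" "fst (last_fun C) x \<in> cObj C" using P2 by blast
      then show "fst (last_fun C) x \<in> cObj C \<and>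
      (\<exists>a\<in>cArr (quot_cat G (le_equiv C G)). cdom (quot_cat G (le_equiv C G)) a = pp (fst (last_fun C) x) \<and>
      ccod (quot_cat G (le_equiv C G)) a = x \<and> snd (last_fun_q C) a = cid C (fst (last_fun C) x))"
        using Q[of a] by metis
    qed
    show "\<forall>p\<in>Cp. \<exists>a\<in>cArr (quot_cat G (le_equiv C G)).
       cdom (quot_cat G (le_equiv C G)) a = pp (cdom C p) \<and>
       ccod (quot_cat G (le_equiv C G)) a = pp (ccod C p) \<and> snd (last_fun_q C) a = p"
    proof
      fix p assume "p \<in> Cp"
      then obtain a where "a \<in> cArr G" "fst a = pp (cdom C p)" "fst (snd a) = pp (ccod C p)" "last_arr C a = p"
        using P3 by blast
      then show "\<exists>a\<in>cArr (quot_cat G (le_equiv C G)).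
       cdom (quot_cat G (le_equiv C G)) a = pp (cdom C p) \<and>
       ccod (quot_cat G (le_equiv C G)) a = pp (ccod C p) \<and> snd (last_fun_q C) a = p"
        using Q[of a] by metis
    qed
    show "\<forall>m\<in>Cm. m \<noteq> cid C (cdom C m) \<longrightarrow> (\<exists>a\<in>cArr (quot_cat G (le_equiv C G)).
       cdom (quot_cat G (le_equiv C G)) a = pp (cdom C m) \<and>
       ccod (quot_cat G (le_equiv C G)) a \<in> cObj G \<and>
       fst (last_fun C) (ccod (quot_cat G (le_equiv C G)) a) = ccod C m \<and> snd (last_fun_q C) a = m)"
    proof (intro ballI impI)
      fix m assume "m \<in> Cm" "m \<noteq> cid C (cdom C m)"
      then obtain a where "a \<in> cArr G" "fst a = pp (cdom C m)" "fst (snd a) \<in> cObj G"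
        "fst (last_fun C) (fst (snd a)) = ccod C m" "last_arr C a = m"
        using P4 by blast
      then show "\<exists>a\<in>cArr (quot_cat G (le_equiv C G)).
       cdom (quot_cat G (le_equiv C G)) a = pp (cdom C m) \<and>
       ccod (quot_cat G (le_equiv C G)) a \<in> cObj G \<and>
       fst (last_fun C) (ccod (quot_cat G (le_equiv C G)) a) = ccod C m \<and> snd (last_fun_q C) a = m"
        using Q[of a] by metis
    qed
  qed
qed

definition Om :: "'m set \<Rightarrow> 'm nobj \<Rightarrow> bool" where
  "Om Cm A \<equiv> \<forall>i j. i \<le> j \<and> j \<le> fst A \<longrightarrow> snd A i j \<in> Cm"
definition Ap :: "'m set \<Rightarrow> 'm narr \<Rightarrow> bool" where
  "Ap Cp f \<equiv> \<forall>i\<le>fst (fst f). snd (snd (snd f)) i \<in> Cp"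
definition Or :: "('o, 'm) cat \<Rightarrow> 'm nobj \<Rightarrow> bool" where
  "Or C A \<equiv> \<forall>i j. i \<le> j \<and> j \<le> fst A \<and> snd A i j = cid C (nobj_at C A i) \<longrightarrow> i = j"
definition Ai :: "'m narr \<Rightarrow> bool" where
  "Ai f \<equiv> inj_on (fst (snd (snd f))) {0..fst (fst f)}"

lemma subcat_simps:
  "cObj (subcat C P Q) = {x \<in> cObj C. P x}"
  "cArr (subcat C P Q) = {f \<in> cArr C. P (cdom C f) \<and> P (ccod C f) \<and> Q f}"
  "cdom (subcat C P Q) = cdom C" "ccod (subcat C P Q) = ccod C"
  unfolding subcat_def by (cases C; simp)+

lemma intN_simps:
  "cObj (intN C) = {A. nerve_obj C A}" "cArr (intN C) = {f. nerve_arr C f}"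
  "cdom (intN C) = fst" "ccod (intN C) = (\<lambda>f. fst (snd f))"
  unfolding intN_def by simp_all

lemma mp_simps:
  "cObj (intN_mp C Cm Cp) = {A. nerve_obj C A \<and> Om Cm A}"
  "cArr (intN_mp C Cm Cp) = {f. nerve_arr C f \<and> Om Cm (fst f) \<and> Om Cm (fst (snd f)) \<and> Ap Cp f}"
  "cdom (intN_mp C Cm Cp) = fst" "ccod (intN_mp C Cm Cp) = (\<lambda>f. fst (snd f))"
  unfolding intN_mp_def subcat_simps Om_def Ap_def by (simp_all add: intN_simps)

lemma mmpp_simps:
  "cObj (intN_mmpp C Cm Cp) = {A. nerve_obj C A \<and> Om Cm A \<and> Or C A}"
  "cArr (intN_mmpp C Cm Cp) = {f. nerve_arr C f \<and> Om Cm (fst f) \<and> Om Cm (fst (snd f)) \<and> Ap Cp f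
     \<and> Or C (fst f) \<and> Or C (fst (snd f)) \<and> Ai f}"
  "cdom (intN_mmpp C Cm Cp) = fst" "ccod (intN_mmpp C Cm Cp) = (\<lambda>f. fst (snd f))"
  unfolding intN_mmpp_def subcat_simps Or_def Ai_def mp_simps by auto

lemma Om_pt: "cid C c \<in> Cm \<Longrightarrow> Om Cm (pt C c)"
  unfolding Om_def pt_def by simp
lemma Or_pt: "Or C (pt C c)"
  unfolding Or_def pt_def by simp
lemma Ai0: "fst (fst f) = 0 \<Longrightarrow> Ai f"
  unfolding Ai_def by simp
lemma Ap0: "fst (fst f) = 0 \<Longrightarrow> snd (snd (snd f)) 0 \<in> Cp \<Longrightarrow> Ap Cp f"
  unfolding Ap_def by simp
lemma Om_X1: "cid C (cdom C m) \<in> Cm \<Longrightarrow> m \<in> Cm \<Longrightarrow> cid C (ccod C m) \<in> Cm \<Longrightarrow> Om Cm (X1 C m)"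
  unfolding Om_def X1_def by simp
lemma Or_X1: assumes C: "is_cat C" and m: "m \<in> cArr C" and ne: "m \<noteq> cid C (cdom C m)"
  shows "Or C (X1 C m)"
  unfolding Or_def
proof (intro allI impI)
  fix i j assume h: "i \<le> j \<and> j \<le> fst (X1 C m) \<and> snd (X1 C m) i j = cid C (nobj_at C (X1 C m) i)"
  have "(i = 0 \<and> j = 0) \<or> (i = 0 \<and> j = 1) \<or> (i = 1 \<and> j = 1)" using h by (simp add: X1_def; linarith)
  then show "i = j" using h ne X1_obj(3)[OF C m] by (auto simp: X1_def)
qed

lemma Pall_all:
  assumes R: "reedy C Cm Cp"
  shows "Pall C Cm Cp (intN C) (last_fun C) (pt C)"
    "Pall C Cm Cp (intN_mp C Cm Cp) (last_fun C) (pt C)"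
    "Pall C Cm Cp (intN_mmpp C Cm Cp) (last_fun C) (pt C)"
proof -
  have C: "is_cat C" and wm: "wide_subcat C Cm" and wp: "wide_subcat C Cp"
    using R unfolding reedy_def by auto
  have Cm: "Cm \<subseteq> cArr C" "\<And>x. x \<in> cObj C \<Longrightarrow> cid C x \<in> Cm" using wm unfolding wide_subcat_def by auto
  have Cp: "Cp \<subseteq> cArr C" "\<And>x. x \<in> cObj C \<Longrightarrow> cid C x \<in> Cp" using wp unfolding wide_subcat_def by auto
  have ptF: "nerve_obj C (pt C c) \<and> Om Cm (pt C c) \<and> Or C (pt C c) \<and> last_obj C (pt C c) = c"
    if "c \<in> cObj C" for c using pt_obj[OF C that] Om_pt[OF Cm(2)[OF that]] Or_pt[of C c] by blast
  have inclF: "nerve_arr C (incl C x) \<and> Om Cm (fst (incl C x)) \<and> Ap Cp (incl C x) \<and> Or C (fst (incl C x))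
     \<and> Ai (incl C x) \<and> fst (incl C x) = pt C (last_obj C x) \<and> fst (snd (incl C x)) = x
     \<and> last_arr C (incl C x) = cid C (last_obj C x) \<and> last_obj C x \<in> cObj C"
    if "nerve_obj C x" for x
  proof -
    have l: "last_obj C x \<in> cObj C" using last_obj_in[OF C that] .
    have f: "fst (fst (incl C x)) = 0" "fst (incl C x) = pt C (last_obj C x)" "fst (snd (incl C x)) = x"
      unfolding incl_def pt_def by simp_all
    have "Ap Cp (incl C x)" apply (rule Ap0[OF f(1)]) using Cp(2)[OF l] unfolding incl_def by simp
    then show ?thesis using f incl_arr[OF C that] ptF[OF l] Ai0[OF f(1)] l by simp
  qed
  have parrF: "nerve_arr C (parr C p) \<and> Ap Cp (parr C p) \<and> Ai (parr C p)
     \<and> fst (parr C p) = pt C (cdom C p) \<and> fst (snd (parr C p)) = pt C (ccod C p)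
     \<and> last_arr C (parr C p) = p \<and> cdom C p \<in> cObj C \<and> ccod C p \<in> cObj C"
    if "p \<in> Cp" for p
  proof -
    have pC: "p \<in> cArr C" using that Cp by auto
    have f: "fst (fst (parr C p)) = 0" "fst (parr C p) = pt C (cdom C p)" "fst (snd (parr C p)) = pt C (ccod C p)"
      unfolding parr_def pt_def by simp_all
    have "Ap Cp (parr C p)" apply (rule Ap0[OF f(1)]) using that unfolding parr_def by simp
    then show ?thesis using f parr_arr[OF C pC] Ai0[OF f(1)] cat_dom[OF C pC] cat_cod[OF C pC] by simp
  qed
  have marrF: "nerve_arr C (marr C m) \<and> Ap Cp (marr C m) \<and> Ai (marr C m)
     \<and> fst (marr C m) = pt C (cdom C m) \<and> fst (snd (marr C m)) = X1 C m
     \<and> last_arr C (marr C m) = m \<and> cdom C m \<in> cObj C \<and> nerve_obj C (X1 C m) \<and> Om Cm (X1 C m)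
     \<and> last_obj C (X1 C m) = ccod C m"
    if "m \<in> Cm" for m
  proof -
    have mC: "m \<in> cArr C" using that Cm by auto
    have d: "cdom C m \<in> cObj C" and c: "ccod C m \<in> cObj C" using cat_dom[OF C mC] cat_cod[OF C mC] .
    have f: "fst (fst (marr C m)) = 0" "fst (marr C m) = pt C (cdom C m)" "fst (snd (marr C m)) = X1 C m"
      unfolding marr_def pt_def by simp_all
    have "Ap Cp (marr C m)" apply (rule Ap0[OF f(1)]) using Cp(2)[OF d] unfolding marr_def by simp
    then show ?thesis using f marr_arr[OF C mC] Ai0[OF f(1)] d X1_obj[OF C mC]
      Om_X1[OF Cm(2)[OF d] that Cm(2)[OF c]] by simp
  qed
  have lf: "fst (last_fun C) = last_obj C" "snd (last_fun C) = last_arr C" unfolding last_fun_def by simp_all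
  show "Pall C Cm Cp (intN C) (last_fun C) (pt C)"
    unfolding Pall_def intN_simps lf
    apply (intro conjI)
    subgoal using ptF by blast
    subgoal using inclF by (metis mem_Collect_eq)
    subgoal using parrF by (metis mem_Collect_eq)
    subgoal using marrF by (metis mem_Collect_eq)
    done
  show "Pall C Cm Cp (intN_mp C Cm Cp) (last_fun C) (pt C)"
    unfolding Pall_def mp_simps lf
    apply (intro conjI)
    subgoal using ptF by blast
    subgoal using inclF ptF by (smt (verit) mem_Collect_eq)
    subgoal using parrF ptF by (smt (verit) mem_Collect_eq)
    subgoal using marrF ptF by (smt (verit) mem_Collect_eq)
    done
  show "Pall C Cm Cp (intN_mmpp C Cm Cp) (last_fun C) (pt C)"
    unfolding Pall_def mmpp_simps lf
    apply (intro conjI)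
    subgoal using ptF by blast
    subgoal using inclF ptF by (smt (verit) mem_Collect_eq)
    subgoal using parrF ptF Or_pt by (smt (verit) mem_Collect_eq)
    subgoal using marrF ptF Or_pt Or_X1[OF C] Cm(1) by (smt (verit) mem_Collect_eq subsetD)
    done
qed

theorem lemma7p8:
  fixes C :: "('o, 'm) cat" and Cm Cp :: "'m set"
    and D :: "('p, 'n) cat"
    and F G :: "('o \<Rightarrow> 'p) \<times> ('m \<Rightarrow> 'n)"
  assumes "reedy C Cm Cp"
    and "is_cat D"
    and "is_functor C D F"
    and "is_functor C D G"
  shows "whisker_unique C D (intN C) (last_fun C) F G
       \<and> whisker_unique C D (intN_mp C Cm Cp) (last_fun C) F G
       \<and> whisker_unique C D (intN_mmpp C Cm Cp) (last_fun C) F G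
       \<and> whisker_unique C D (Down_star C Cm Cp) (last_fun_q C) F G
       \<and> whisker_unique C D (Down C Cm Cp) (last_fun_q C) F G"
proof -
  have C: "is_cat C" using assms(1) unfolding reedy_def by auto
  note W = reedy_whisker[OF assms]
  note P = Pall_all[OF assms(1)]
  have Q1: "Pall C Cm Cp (Down_star C Cm Cp) (last_fun_q C) (pt C)"
    unfolding Down_star_def
    by (rule Pall_quot[OF C _ _ _ P(2)]) (auto simp: mp_simps)
  have Q2: "Pall C Cm Cp (Down C Cm Cp) (last_fun_q C) (pt C)"
    unfolding Down_def
    by (rule Pall_quot[OF C _ _ _ P(3)]) (auto simp: mmpp_simps)
  show ?thesis using W[OF P(1)] W[OF P(2)] W[OF P(3)] W[OF Q1] W[OF Q2] by blast
qed

end
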